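(* Let $K\in\{\mathbb{Q}_2(\sqrt{-1}),\mathbb{Q}_2(\sqrt{-5})\}$, $d=2m$ with $m$ odd, $m\ge3$, and $f=a_1x_1^d+\dots+a_sx_s^d$ with all $a_i\in\mathcal{O}\setminus\{0\}$. Suppose that for some level $k$, $f$ has at least three variables at level $k$ all with the same $\pi$-coefficient, and at least one variable at level $k+4$. Then $f$ has a nontrivial zero in $K$.
   Context: $\mathcal{O}$ is the ring of integers of $K$ and $\pi$ the uniformizer: $\pi=1+\sqrt{-1}$ for $\mathbb{Q}_2(\sqrt{-1})$ and $\pi=1+\sqrt{-5}$ for $\mathbb{Q}_2(\sqrt{-5})$. Each unit $u$ has a unique expansion $u=c_0+c_1\pi+c_2\pi^2+\cdots$ with $c_j\in\{0,1\}$, $c_0=1$. Writing $a_i=\pi^r u$ with $u$ a unit, the variable $x_i$ is at level $r\bmod d$ (levels are residues modulo $d$), and its $\pi$-coefficient is $c_1$ of $u$. A nontrivial zero is a point of $K^s$, not all coordinates zero, where $f$ vanishes. *)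

theory Defs
  imports Main
begin

text \<open>Z[alpha] with alpha^2 = -D is represented by pairs (a,b) = a + b*alpha.
  The ring of integers O = Z_2[alpha] (true for D = 1, 5 since -D = 3 mod 4) is the
  inverse limit of Z[alpha]/2^n Z[alpha]: an element is a sequence x :: nat => int*int
  with x (Suc n) = x n modulo 2^n (componentwise); two elements are equal iff they
  agree modulo 2^n for every n.  K = Frac(O) = O[1/2] is represented by pairs (o,e)
  standing for o / 2^e.\<close>

type_synonym zalpha = "int \<times> int"

definition zmul :: "int \<Rightarrow> zalpha \<Rightarrow> zalpha \<Rightarrow> zalpha" where
  "zmul D u v = (fst u * fst v - D * snd u * snd v, fst u * snd v + snd u * fst v)"

definition zadd :: "zalpha \<Rightarrow> zalpha \<Rightarrow> zalpha" where
  "zadd u v = (fst u + fst v, snd u + snd v)"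

definition zsub :: "zalpha \<Rightarrow> zalpha \<Rightarrow> zalpha" where
  "zsub u v = (fst u - fst v, snd u - snd v)"

fun zpow :: "int \<Rightarrow> zalpha \<Rightarrow> nat \<Rightarrow> zalpha" where
  "zpow D u 0 = (1, 0)"
| "zpow D u (Suc k) = zmul D u (zpow D u k)"

definition zcong :: "nat \<Rightarrow> zalpha \<Rightarrow> zalpha \<Rightarrow> bool" where
  "zcong n u v \<longleftrightarrow> (2::int)^n dvd (fst u - fst v) \<and> (2::int)^n dvd (snd u - snd v)"

type_synonym Oelt = "nat \<Rightarrow> zalpha"

definition in_O :: "Oelt \<Rightarrow> bool" where
  "in_O x \<longleftrightarrow> (\<forall>n. zcong n (x (Suc n)) (x n))"

definition O_eq :: "Oelt \<Rightarrow> Oelt \<Rightarrow> bool" where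
  "O_eq x y \<longleftrightarrow> (\<forall>n. zcong n (x n) (y n))"

definition O_of :: "zalpha \<Rightarrow> Oelt" where
  "O_of c = (\<lambda>n. c)"

definition O_zero :: Oelt where "O_zero = O_of (0, 0)"
definition O_one :: Oelt where "O_one = O_of (1, 0)"
definition O_two :: Oelt where "O_two = O_of (2, 0)"

text \<open>The uniformizer pi = 1 + alpha.\<close>
definition O_pi :: Oelt where "O_pi = O_of (1, 1)"

definition O_add :: "Oelt \<Rightarrow> Oelt \<Rightarrow> Oelt" where
  "O_add x y = (\<lambda>n. zadd (x n) (y n))"

definition O_sub :: "Oelt \<Rightarrow> Oelt \<Rightarrow> Oelt" where
  "O_sub x y = (\<lambda>n. zsub (x n) (y n))"

definition O_mul :: "int \<Rightarrow> Oelt \<Rightarrow> Oelt \<Rightarrow> Oelt" where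
  "O_mul D x y = (\<lambda>n. zmul D (x n) (y n))"

definition O_pow :: "int \<Rightarrow> Oelt \<Rightarrow> nat \<Rightarrow> Oelt" where
  "O_pow D x k = (\<lambda>n. zpow D (x n) k)"

type_synonym Kelt = "Oelt \<times> nat"

definition K_of_O :: "Oelt \<Rightarrow> Kelt" where "K_of_O x = (x, 0)"
definition K_zero :: Kelt where "K_zero = (O_zero, 0)"

definition K_add :: "int \<Rightarrow> Kelt \<Rightarrow> Kelt \<Rightarrow> Kelt" where
  "K_add D p q = (O_add (O_mul D (fst p) (O_pow D O_two (snd q)))
                        (O_mul D (fst q) (O_pow D O_two (snd p))), snd p + snd q)"

definition K_mul :: "int \<Rightarrow> Kelt \<Rightarrow> Kelt \<Rightarrow> Kelt" where
  "K_mul D p q = (O_mul D (fst p) (fst q), snd p + snd q)"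

definition K_pow :: "int \<Rightarrow> Kelt \<Rightarrow> nat \<Rightarrow> Kelt" where
  "K_pow D p k = (O_pow D (fst p) k, snd p * k)"

definition K_eq :: "int \<Rightarrow> Kelt \<Rightarrow> Kelt \<Rightarrow> bool" where
  "K_eq D p q \<longleftrightarrow> O_eq (O_mul D (fst p) (O_pow D O_two (snd q)))
                        (O_mul D (fst q) (O_pow D O_two (snd p)))"

definition diag_form :: "int \<Rightarrow> nat \<Rightarrow> (nat \<Rightarrow> Oelt) \<Rightarrow> nat \<Rightarrow> (nat \<Rightarrow> Kelt) \<Rightarrow> Kelt" where
  "diag_form D d a s x =
     foldr (\<lambda>i acc. K_add D (K_mul D (K_of_O (a i)) (K_pow D (x i) d)) acc) [0..<s] K_zero"

text \<open>The coefficient a (nonzero in O) is at level k (mod d) with pi-coefficient c: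
  a = pi^r * u with r = k mod d and u = 1 + c*pi (mod pi^2), c in {0,1}
  (such u is a unit with expansion coefficients c_0 = 1, c_1 = c).\<close>
definition level_coeff :: "int \<Rightarrow> nat \<Rightarrow> Oelt \<Rightarrow> nat \<Rightarrow> int \<Rightarrow> bool" where
  "level_coeff D d a k c \<longleftrightarrow> c \<in> {0, 1} \<and>
     (\<exists>r u w. in_O u \<and> in_O w \<and> r mod d = k mod d \<and>
        O_eq a (O_mul D (O_pow D O_pi r) u) \<and>
        O_eq (O_sub u (O_add O_one (O_mul D (O_of (c, 0)) O_pi))) (O_mul D (O_pow D O_pi 2) w))"

definition at_level :: "int \<Rightarrow> nat \<Rightarrow> Oelt \<Rightarrow> nat \<Rightarrow> bool" where
  "at_level D d a k \<longleftrightarrow> (\<exists>c. level_coeff D d a k c)"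

end

theory Submission
  imports Defs Complex_Main
begin

definition bt :: "int \<Rightarrow> complex" where "bt D = \<i> * of_real (sqrt (of_int D))"
definition iota :: "int \<Rightarrow> zalpha \<Rightarrow> complex" where
  "iota D p = of_int (fst p) + of_int (snd p) * bt D"
definition Rg :: "int \<Rightarrow> complex set" where "Rg D = range (iota D)"
definition cg :: "int \<Rightarrow> nat \<Rightarrow> complex \<Rightarrow> complex \<Rightarrow> bool" where
  "cg D n x y \<longleftrightarrow> (\<exists>z\<in>Rg D. x - y = 2^n * z)"

lemma bt_sq: assumes "D \<ge> 0" shows "bt D * bt D = - of_int D"
proof -
  have "sqrt (of_int D) * sqrt (of_int D) = (of_int D :: real)" using assms by simp
  then have "of_real (sqrt (of_int D)) * of_real (sqrt (of_int D)) = (of_int D :: complex)"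
    by (metis of_real_mult of_real_of_int_eq)
  then show ?thesis unfolding bt_def
    by (simp add: algebra_simps)
qed

lemma iota_mul: "D \<ge> 0 \<Longrightarrow> iota D (zmul D u v) = iota D u * iota D v"
proof -
  assume h: "D \<ge> 0"
  have "iota D u * iota D v = of_int (fst u) * of_int (fst v) + of_int (snd u) * of_int (snd v) * (bt D * bt D)
     + (of_int (fst u) * of_int (snd v) + of_int (snd u) * of_int (fst v)) * bt D"
    unfolding iota_def by (simp add: algebra_simps)
  also have "\<dots> = iota D (zmul D u v)" unfolding iota_def zmul_def using bt_sq[OF h]
    by (simp add: algebra_simps)
  finally show ?thesis by simp
qed

lemma iota_add: "iota D (zadd u v) = iota D u + iota D v"
  unfolding iota_def zadd_def by (simp add: algebra_simps)
lemma iota_sub: "iota D (zsub u v) = iota D u - iota D v"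
  unfolding iota_def zsub_def by (simp add: algebra_simps)
lemma iota_pow: assumes "D \<ge> 0" shows "iota D (zpow D u k) = iota D u ^ k"
proof (induction k)
  case 0 show ?case by (simp add: iota_def)
next
  case (Suc k) then show ?case by (simp add: iota_mul[OF assms])
qed
lemma iota_pair: "iota D (a, b) = of_int a + of_int b * bt D" by (simp add: iota_def)

lemma bt_Im: "D > 0 \<Longrightarrow> Im (bt D) \<noteq> 0 \<and> Re (bt D) = 0"
  unfolding bt_def by simp

lemma iota_inj: "D > 0 \<Longrightarrow> iota D u = iota D v \<longleftrightarrow> u = v"
proof
  assume D: "D > 0" and e: "iota D u = iota D v"
  have "Im (iota D u) = Im (iota D v)" "Re (iota D u) = Re (iota D v)" using e by auto
  then show "u = v" using bt_Im[OF D] unfolding iota_def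
    by (auto simp: prod_eq_iff)
qed simp


lemma iota_in[simp]: "iota D p \<in> Rg D" by (simp add: Rg_def)
lemma Rg_of_int[simp]: "of_int a \<in> Rg D"
  using iota_in[of D "(a,0)"] by (simp add: iota_def)
lemma Rg_0[simp]: "0 \<in> Rg D" using Rg_of_int[of 0 D] by simp
lemma Rg_1[simp]: "1 \<in> Rg D" using Rg_of_int[of 1 D] by simp
lemma Rg_numeral[simp]: "numeral k \<in> Rg D" using Rg_of_int[of "numeral k" D] by simp
lemma Rg_bt[simp]: "bt D \<in> Rg D"
  using iota_in[of D "(0,1)"] by (simp add: iota_def)
lemma Rg_add[simp]: assumes "x \<in> Rg D" "y \<in> Rg D" shows "x + y \<in> Rg D"
proof -
  from assms obtain p q where "x = iota D p" "y = iota D q" by (auto simp: Rg_def)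
  then show ?thesis using iota_add[of D p q, symmetric] iota_in by metis
qed
lemma Rg_sub[simp]: assumes "x \<in> Rg D" "y \<in> Rg D" shows "x - y \<in> Rg D"
proof -
  from assms obtain p q where "x = iota D p" "y = iota D q" by (auto simp: Rg_def)
  then show ?thesis using iota_sub[of D p q, symmetric] iota_in by metis
qed
lemma Rg_uminus[simp]: "x \<in> Rg D \<Longrightarrow> - x \<in> Rg D"
  using Rg_sub[of 0 D x] by simp
lemma Rg_mult[simp]: assumes "D \<ge> 0" "x \<in> Rg D" "y \<in> Rg D" shows "x * y \<in> Rg D"
proof -
  from assms obtain p q where "x = iota D p" "y = iota D q" by (auto simp: Rg_def)
  then show ?thesis using iota_mul[OF assms(1), of p q, symmetric] iota_in by metis
qed
lemma Rg_scale[simp]: assumes "x \<in> Rg D" shows "of_int c * x \<in> Rg D"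
proof -
  from assms obtain p where "x = iota D p" by (auto simp: Rg_def)
  then have "of_int c * x = iota D (c * fst p, c * snd p)" by (simp add: iota_def algebra_simps)
  then show ?thesis by simp
qed
lemma Rg_scale2[simp]: assumes "x \<in> Rg D" shows "2 ^ k * x \<in> Rg D"
  using Rg_scale[OF assms, of "2^k"] by simp
lemma Rg_pow[simp]: "D \<ge> 0 \<Longrightarrow> x \<in> Rg D \<Longrightarrow> x ^ k \<in> Rg D"
  by (induction k) auto

lemma cnj_bt: "D \<ge> 0 \<Longrightarrow> cnj (bt D) = - bt D" by (simp add: bt_def)
lemma cnj_iota: "D \<ge> 0 \<Longrightarrow> cnj (iota D (a,b)) = iota D (a, -b)"
  by (simp add: iota_def cnj_bt)
lemma Rg_cnj[simp]: assumes "D \<ge> 0" "x \<in> Rg D" shows "cnj x \<in> Rg D"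
proof -
  from assms obtain a b where "x = iota D (a,b)" by (auto simp: Rg_def)
  then show ?thesis using cnj_iota[OF assms(1)] by simp
qed
lemma norm_iota: "D \<ge> 0 \<Longrightarrow> iota D (a,b) * cnj (iota D (a,b)) = of_int (a^2 + D * b^2)"
proof -
  assume h: "D \<ge> 0"
  have "iota D (a,b) * cnj (iota D (a,b)) = of_int a * of_int a - of_int b * of_int b * (bt D * bt D)"
    by (simp add: cnj_iota h iota_def cnj_bt algebra_simps)
  also have "\<dots> = of_int (a^2 + D * b^2)" by (simp add: bt_sq h power2_eq_square)
  finally show ?thesis .
qed

lemma cg_refl[simp]: "cg D n x x" unfolding cg_def by (rule bexI[of _ 0]) auto
lemma cg_sym: "cg D n x y \<Longrightarrow> cg D n y x"
  unfolding cg_def by (metis Rg_uminus minus_diff_eq mult_minus_right)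
lemma cg_trans: "cg D n x y \<Longrightarrow> cg D n y z \<Longrightarrow> cg D n x z"
proof -
  assume "cg D n x y" "cg D n y z"
  then obtain a b where "a \<in> Rg D" "b \<in> Rg D" "x - y = 2^n * a" "y - z = 2^n * b"
    unfolding cg_def by blast
  then show ?thesis unfolding cg_def
    by (intro bexI[of _ "a+b"]) (auto simp: algebra_simps)
qed
lemma cg_add: "cg D n x y \<Longrightarrow> cg D n x' y' \<Longrightarrow> cg D n (x + x') (y + y')"
proof -
  assume "cg D n x y" "cg D n x' y'"
  then obtain a b where "a \<in> Rg D" "b \<in> Rg D" "x - y = 2^n * a" "x' - y' = 2^n * b"
    unfolding cg_def by blast
  then show ?thesis unfolding cg_def
    by (intro bexI[of _ "a+b"]) (auto simp: algebra_simps)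
qed
lemma cg_sub: "cg D n x y \<Longrightarrow> cg D n x' y' \<Longrightarrow> cg D n (x - x') (y - y')"
proof -
  assume "cg D n x y" "cg D n x' y'"
  then obtain a b where "a \<in> Rg D" "b \<in> Rg D" "x - y = 2^n * a" "x' - y' = 2^n * b"
    unfolding cg_def by blast
  then show ?thesis unfolding cg_def
    by (intro bexI[of _ "a-b"]) (auto simp: algebra_simps)
qed
lemma cg_multL: "D \<ge> 0 \<Longrightarrow> w \<in> Rg D \<Longrightarrow> cg D n x y \<Longrightarrow> cg D n (w * x) (w * y)"
proof -
  assume h: "D \<ge> 0" "w \<in> Rg D" "cg D n x y"
  then obtain a where "a \<in> Rg D" "x - y = 2^n * a" unfolding cg_def by blast
  then show ?thesis unfolding cg_def using h
    by (intro bexI[of _ "w*a"]) (auto simp: algebra_simps)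
qed
lemma cg_mult: "D \<ge> 0 \<Longrightarrow> x \<in> Rg D \<Longrightarrow> y' \<in> Rg D \<Longrightarrow> cg D n x y \<Longrightarrow> cg D n x' y'
   \<Longrightarrow> cg D n (x * x') (y * y')"
proof -
  assume h: "D \<ge> 0" "x \<in> Rg D" "y' \<in> Rg D" "cg D n x y" "cg D n x' y'"
  have "cg D n (x * x') (x * y')" by (rule cg_multL) (use h in auto)
  moreover have "cg D n (y' * x) (y' * y)" by (rule cg_multL) (use h in auto)
  ultimately show ?thesis by (metis cg_trans mult.commute)
qed
lemma cg_pow: "D \<ge> 0 \<Longrightarrow> x \<in> Rg D \<Longrightarrow> y \<in> Rg D \<Longrightarrow> cg D n x y \<Longrightarrow> cg D n (x ^ k) (y ^ k)"
  by (induction k) (auto intro: cg_mult)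
lemma cg_mono: "k \<le> n \<Longrightarrow> cg D n x y \<Longrightarrow> cg D k x y"
proof -
  assume h: "k \<le> n" "cg D n x y"
  then obtain a where a: "a \<in> Rg D" "x - y = 2^n * a" unfolding cg_def by blast
  have "(2::complex)^n = 2^k * 2^(n-k)" using h by (simp add: power_add[symmetric])
  then show ?thesis unfolding cg_def using a
    by (intro bexI[of _ "2^(n-k) * a"]) (auto simp: mult.assoc)
qed
lemma cg_0: "cg D n x y \<longleftrightarrow> cg D n (x - y) 0" unfolding cg_def by simp

lemma zcong_iota: assumes "D > 0" shows "zcong n u v \<longleftrightarrow> cg D n (iota D u) (iota D v)"
proof
  assume "zcong n u v"
  then obtain p q where "fst u - fst v = 2^n * p" "snd u - snd v = 2^n * q"
    unfolding zcong_def by (auto elim!: dvdE)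
  then have "iota D u - iota D v = 2^n * iota D (p,q)"
    unfolding iota_def by (simp add: algebra_simps)
  then show "cg D n (iota D u) (iota D v)" unfolding cg_def by auto
next
  assume "cg D n (iota D u) (iota D v)"
  then obtain p where "iota D u - iota D v = 2^n * iota D p" unfolding cg_def Rg_def by auto
  then have "iota D (zsub u v) = iota D (2^n * fst p, 2^n * snd p)"
    unfolding iota_sub by (simp add: iota_def algebra_simps)
  then have "zsub u v = (2^n * fst p, 2^n * snd p)" using iota_inj[OF assms] by blast
  then show "zcong n u v" unfolding zcong_def zsub_def by auto
qed

definition unitR :: "int \<Rightarrow> complex \<Rightarrow> bool" where
  "unitR D x \<longleftrightarrow> (\<exists>a b. x = iota D (a,b) \<and> odd (a+b))"

lemma unitR_iota: "D > 0 \<Longrightarrow> unitR D (iota D (a,b)) \<longleftrightarrow> odd (a+b)"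
  unfolding unitR_def using iota_inj by auto

lemma unitR_Rg: "unitR D x \<Longrightarrow> x \<in> Rg D" unfolding unitR_def by auto

lemma unitR_mult: assumes D: "D = 1 \<or> D = 5" and "unitR D x" "unitR D y" shows "unitR D (x * y)"
proof -
  from assms obtain a b c e where x: "x = iota D (a,b)" "odd (a+b)" and y: "y = iota D (c,e)" "odd (c+e)"
    unfolding unitR_def by blast
  have D0: "D \<ge> 0" using D by auto
  have "x * y = iota D (zmul D (a,b) (c,e))" using x y by (simp add: iota_mul[OF D0])
  moreover have "odd (a*c - D*b*e + (a*e + b*c))"
  proof -
    have "a*c - D*b*e + (a*e + b*c) = (a+b)*(c+e) - (D+1)*b*e" by (simp add: algebra_simps)
    moreover have "even ((D+1)*b*e)" using D by auto
    moreover have "odd ((a+b)*(c+e))" using x y by simp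
    ultimately show ?thesis by simp
  qed
  ultimately show ?thesis unfolding unitR_def zmul_def
    by (intro exI[of _ "a*c - D*b*e"] exI[of _ "a*e + b*c"]) simp
qed

lemma unitR_1[simp]: "unitR D 1" unfolding unitR_def by (rule exI[of _ 1], rule exI[of _ 0]) (simp add: iota_def)

lemma unitR_pow: "D = 1 \<or> D = 5 \<Longrightarrow> unitR D x \<Longrightarrow> unitR D (x ^ k)"
  by (induction k) (auto intro: unitR_mult)

lemma unitR_cnj: assumes D: "D = 1 \<or> D = 5" and "unitR D x" shows "unitR D (cnj x)"
proof -
  from assms obtain a b where x: "x = iota D (a,b)" "odd (a+b)" unfolding unitR_def by blast
  have "odd (a + - b)" using x by simp
  moreover have "cnj x = iota D (a, -b)" using x D cnj_iota[of D a b] by auto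
  ultimately show ?thesis unfolding unitR_def by (intro exI[of _ a] exI[of _ "-b"]) auto
qed

lemma unitR_norm: assumes D: "D = 1 \<or> D = 5" and "unitR D x" shows "\<exists>n. odd n \<and> x * cnj x = of_int n"
proof -
  from assms obtain a b where x: "x = iota D (a,b)" "odd (a+b)" unfolding unitR_def by blast
  have "a^2 + D * b^2 = (a+b)^2 - 2*a*b + (D - 1) * b^2" by (simp add: algebra_simps power2_eq_square)
  moreover have "even (2*a*b)" "even ((D - 1) * b^2)" using D by auto
  moreover have "odd ((a+b)^2)" using x by simp
  ultimately have "odd (a^2 + D * b^2)" by (metis even_add even_diff)
  moreover have "x * cnj x = of_int (a^2 + D * b^2)" using norm_iota[of D a b] D x by auto
  ultimately show ?thesis by blast
qed

lemma unitR_cg: assumes D: "D = 1 \<or> D = 5" and "unitR D x" "y \<in> Rg D" "cg D 1 x y" shows "unitR D y"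
proof -
  from assms obtain a b where x: "x = iota D (a,b)" "odd (a+b)" unfolding unitR_def by blast
  from assms obtain p where y: "y = iota D p" unfolding Rg_def by auto
  have D0: "D > 0" using D by auto
  have "zcong 1 (a,b) p" using zcong_iota[OF D0, of 1 "(a,b)" p] x(1) y assms(4) by simp
  then have "even (a - fst p)" "even (b - snd p)" unfolding zcong_def by auto
  then have "odd (fst p + snd p)" using x(2) by (metis add_diff_add even_add even_diff)
  then show ?thesis using y unfolding unitR_def by (metis prod.collapse)
qed

lemma cg_unscale: assumes "cg D (n + k) (2^k * x) 0" shows "cg D n x 0"
proof -
  from assms obtain z where z: "z \<in> Rg D" "2^k * x = 2^(n+k) * z" unfolding cg_def by auto
  then have "2^k * x = 2^k * (2^n * z)" by (simp add: power_add algebra_simps)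
  then have "x = 2^n * z" by simp
  then show ?thesis using z unfolding cg_def by auto
qed

lemma cg_odd_cancel: assumes D: "D > 0" and "odd q" "x \<in> Rg D" "cg D n (of_int q * x) 0"
  shows "cg D n x 0"
proof -
  from assms obtain a b where x: "x = iota D (a,b)" unfolding Rg_def by (metis prod.collapse rangeE)
  have "of_int q * x = iota D (q*a, q*b)" using x by (simp add: iota_def algebra_simps)
  then have "zcong n (q*a, q*b) (0,0)" using zcong_iota[OF D, of n "(q*a,q*b)" "(0,0)"] assms(4)
    by (simp add: iota_def)
  then have d: "2^n dvd q*a" "2^n dvd q*b" unfolding zcong_def by auto
  have cp: "coprime ((2::int)^n) q" using assms(2) by auto
  have "2^n dvd a" "2^n dvd b" using d cp coprime_dvd_mult_right_iff by blast+
  then have "zcong n (a,b) (0,0)" unfolding zcong_def by simp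
  then show ?thesis using zcong_iota[OF D, of n "(a,b)" "(0,0)"] x by (simp add: iota_def)
qed

definition piD :: "int \<Rightarrow> complex" where "piD D = 1 + bt D"

lemma piD_iota: "piD D = iota D (1,1)" by (simp add: piD_def iota_def)
lemma piD_Rg[simp]: "piD D \<in> Rg D" by (simp add: piD_iota)

lemma piD_norm: "D \<ge> 0 \<Longrightarrow> piD D * cnj (piD D) = of_int (1 + D)"
  using norm_iota[of D 1 1] by (simp add: piD_iota)

lemma not_unit_pi: assumes D: "D = 1 \<or> D = 5" and "z \<in> Rg D" shows "\<not> unitR D (piD D * z)"
proof -
  from assms obtain c e where z: "z = iota D (c,e)" unfolding Rg_def by (metis prod.collapse rangeE)
  have D0: "D \<ge> 0" using D by auto
  have "piD D * z = iota D (zmul D (1,1) (c,e))" using z by (simp add: iota_mul[OF D0] piD_iota)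
  then have pz: "piD D * z = iota D (c - D*e, e + c)" by (simp add: zmul_def)
  have eq: "c - D*e + (e + c) = 2*c + (1 - D) * e" by (simp add: algebra_simps)
  have "even ((1 - D) * e)" using D by auto
  then have ev: "even (c - D*e + (e + c))" unfolding eq by simp
  have "D > 0" using D by auto
  then have "unitR D (piD D * z) \<longleftrightarrow> odd (c - D*e + (e + c))" unfolding pz by (rule unitR_iota)
  then show ?thesis using ev by simp
qed

lemma not_unit_0: assumes D: "D = 1 \<or> D = 5" and "cg D 1 x 0" shows "\<not> unitR D x"
proof
  assume u: "unitR D x"
  from assms obtain z where "z \<in> Rg D" "x = 2 * z" unfolding cg_def by auto
  then obtain p where "z = iota D p" unfolding Rg_def by auto
  then have "x = iota D (2*fst p, 2*snd p)" using \<open>x = 2 * z\<close> by (simp add: iota_def algebra_simps)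
  then obtain c e where xe: "x = iota D (2*c, 2*e)" by blast
  have D0: "D > 0" using D by auto
  have "unitR D x \<longleftrightarrow> odd (2*c + 2*e)" unfolding xe by (rule unitR_iota[OF D0])
  then show False using u by simp
qed

lemma pi_cancel: assumes D: "D = 1 \<or> D = 5" and "x \<in> Rg D" "cg D (t + 1) (piD D ^ t * x) 0"
  shows "cg D 1 x 0"
proof -
  define h :: int where "h = (1 + D) div 2"
  have h: "odd h" "(1 + D) = 2 * h" using D by (auto simp: h_def)
  have "cg D (t+1) (cnj (piD D) ^ t * (piD D ^ t * x)) (cnj (piD D) ^ t * 0)"
    using assms by (intro cg_multL) auto
  moreover have "cnj (piD D) ^ t * (piD D ^ t * x) = 2^t * (of_int (h^t) * x)"
  proof -
    have "cnj (piD D) ^ t * (piD D ^ t * x) = (piD D * cnj (piD D)) ^ t * x"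
      by (simp add: power_mult_distrib algebra_simps)
    also have "\<dots> = (of_int (1 + D)) ^ t * x" using piD_norm[of D] D by auto
    also have "\<dots> = (2 * of_int h) ^ t * x" using h by simp
    finally show ?thesis by (simp add: power_mult_distrib)
  qed
  ultimately have "cg D (1 + t) (2^t * (of_int (h^t) * x)) 0" by (simp add: add.commute)
  then have c1: "cg D 1 (of_int (h^t) * x) 0" by (rule cg_unscale)
  have D0: "D > 0" using D by auto
  have oh: "odd (h^t)" using h(1) by simp
  show ?thesis by (rule cg_odd_cancel[OF D0 oh assms(2) c1])
qed

lemma Rg_of_nat[simp]: "of_nat k \<in> Rg D" using Rg_of_int[of "int k" D] by simp

lemma binom2: assumes D0: "D \<ge> 0" and y: "y \<in> Rg D" and h: "h \<in> Rg D"
  shows "\<exists>E\<in>Rg D. (y + h) ^ Suc n = y ^ Suc n + of_nat (Suc n) * y ^ n * h + h^2 * E"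
proof (induction n)
  case 0 show ?case by (rule bexI[of _ 0]) auto
next
  case (Suc n)
  then obtain E where E: "E \<in> Rg D" "(y + h) ^ Suc n = y ^ Suc n + of_nat (Suc n) * y ^ n * h + h^2 * E" by blast
  have "(y + h) ^ Suc (Suc n) = (y + h) * (y ^ Suc n + of_nat (Suc n) * y ^ n * h + h^2 * E)"
    using E by simp
  also have "\<dots> = y ^ Suc (Suc n) + of_nat (Suc (Suc n)) * y ^ Suc n * h
      + h^2 * (y * E + of_nat (Suc n) * y ^ n + h * E)"
    by (simp add: algebra_simps power2_eq_square)
  finally show ?case using E D0 y h by (intro bexI[of _ "y * E + of_nat (Suc n) * y ^ n + h * E"]) auto
qed

lemma hstep:
  assumes D: "D = 1 \<or> D = 5" and m: "odd m" and j: "j \<ge> 3"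
    and U: "unitR D U" and T: "T \<in> Rg D" and y: "unitR D y"
    and c: "cg D j (U * y ^ (2*m) + T) 0"
  shows "\<exists>y'. y' \<in> Rg D \<and> unitR D y' \<and> cg D (j - 1) y' y \<and> cg D (j + 1) (U * y' ^ (2*m) + T) 0"
proof -
  have D0: "D \<ge> 0" using D by auto
  have URg: "U \<in> Rg D" and yRg: "y \<in> Rg D" using U y unitR_Rg by auto
  obtain r where r: "r \<in> Rg D" "U * y ^ (2*m) + T = 2^j * r" using c unfolding cg_def by auto
  have mu: "unitR D (of_nat m)"
  proof -
    have "(of_nat m :: complex) = iota D (int m, 0)" by (simp add: iota_def)
    moreover have "odd (int m + 0)" using m by simp
    ultimately show ?thesis unfolding unitR_def by blast
  qed
  define V where "V = U * of_nat m * y ^ (2*m - 1)"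
  have V: "unitR D V" unfolding V_def using D U mu y by (intro unitR_mult unitR_pow) auto
  obtain nV where nV: "odd nV" "V * cnj V = of_int nV" using unitR_norm[OF D V] by blast
  obtain kk where kk: "1 + nV = 2 * kk" using nV(1) by (metis add.commute dvd_def odd_add odd_one)
  have VRg: "V \<in> Rg D" using V unitR_Rg by auto
  define t where "t = r * cnj V"
  have tRg: "t \<in> Rg D" unfolding t_def using r VRg D0 by auto
  define h where "h = 2^(j-1) * t"
  have hRg: "h \<in> Rg D" unfolding h_def using tRg by simp
  obtain E where E: "E \<in> Rg D" "(y + h) ^ Suc (2*m-1) = y ^ Suc (2*m-1) + of_nat (Suc (2*m-1)) * y ^ (2*m-1) * h + h^2 * E"
    using binom2[OF D0 yRg hRg] by blast
  have m1: "Suc (2*m-1) = 2*m" using m by (cases m) auto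
  have E2: "(y + h) ^ (2*m) = y ^ (2*m) + of_nat (2*m) * y ^ (2*m-1) * h + h^2 * E"
    using E(2) unfolding m1 .
  have hh: "h^2 = 2^(j+1) * (2^(j-3) * t^2)"
  proof -
    have "h^2 = 2^(2*(j-1)) * t^2" unfolding h_def by (simp add: power_mult_distrib power_mult[symmetric] mult.commute)
    moreover have "2*(j-1) = (j+1) + (j-3)" using j by simp
    then have "(2::complex)^(2*(j-1)) = 2^(j+1) * 2^(j-3)" by (metis power_add)
    ultimately show ?thesis by (simp add: algebra_simps)
  qed
  have lin: "U * (of_nat (2*m) * y ^ (2*m-1) * h) = 2^j * (r * of_int nV)"
  proof -
    have "U * (of_nat (2*m) * y ^ (2*m-1) * h) = 2 * 2^(j-1) * (V * cnj V) * r"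
      unfolding h_def t_def V_def by (simp add: algebra_simps)
    also have "2 * 2^(j-1) = (2::complex)^j" using j by (cases j) auto
    finally show ?thesis using nV(2) by (simp add: algebra_simps)
  qed
  have "U * (y + h) ^ (2*m) + T = (U * y ^ (2*m) + T) + U * (of_nat (2*m) * y ^ (2*m-1) * h) + U * h^2 * E"
    unfolding E2 by (simp add: algebra_simps)
  also have "\<dots> = 2^j * r * (1 + of_int nV) + U * h^2 * E" unfolding lin r(2) by (simp add: algebra_simps)
  also have "\<dots> = 2^(j+1) * (r * of_int kk + U * (2^(j-3) * t^2) * E)"
  proof -
    have "(1 + of_int nV :: complex) = 2 * of_int kk" using kk by (metis of_int_1 of_int_add of_int_mult of_int_numeral)
    then show ?thesis unfolding hh by (simp add: algebra_simps)
  qed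
  finally have c2: "cg D (j+1) (U * (y + h) ^ (2*m) + T) 0"
    unfolding cg_def using r(1) URg tRg E(1) D0 by (intro bexI[of _ "r * of_int kk + U * (2^(j-3) * t^2) * E"]) auto
  have c3: "cg D (j-1) (y + h) y" unfolding cg_def h_def using tRg by (intro bexI[of _ t]) auto
  have "cg D 1 (y + h) y" using j c3 cg_mono[of 1 "j-1" D "y+h" y] by linarith
  then have "cg D 1 y (y + h)" by (rule cg_sym)
  moreover have "y + h \<in> Rg D" using yRg hRg by simp
  ultimately have "unitR D (y + h)" using unitR_cg[OF D y] by blast
  then show ?thesis using c2 c3 \<open>y + h \<in> Rg D\<close> by blast
qed

primrec hseq :: "int \<Rightarrow> nat \<Rightarrow> (nat \<Rightarrow> complex) \<Rightarrow> (nat \<Rightarrow> complex) \<Rightarrow> complex \<Rightarrow> nat \<Rightarrow> complex" where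
  "hseq D m Us Ts x0 0 = x0"
| "hseq D m Us Ts x0 (Suc n) = (SOME y'. y' \<in> Rg D \<and> unitR D y' \<and> cg D (n+2) y' (hseq D m Us Ts x0 n)
      \<and> cg D (n+4) (Us (n+4) * y' ^ (2*m) + Ts (n+4)) 0)"

lemma coh_chain: assumes "\<forall>n. cg D n (S (Suc n)) (S n)" shows "cg D n (S (n + k)) (S n)"
proof (induction k)
  case 0 show ?case by simp
next
  case (Suc k)
  have "cg D (n + k) (S (Suc (n + k))) (S (n + k))" using assms by blast
  then have "cg D n (S (Suc (n + k))) (S (n + k))" by (rule cg_mono[rotated]) simp
  then show ?case using Suc cg_trans by fastforce
qed

lemma cg_lin: assumes "D \<ge> 0" "w \<in> Rg D" "cg D n a a'" "cg D n b b'"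
  shows "cg D n (a * w + b) (a' * w + b')"
proof -
  have "cg D n (w * a) (w * a')" by (rule cg_multL) (use assms in auto)
  then show ?thesis using cg_add[OF _ assms(4)] by (simp add: mult.commute)
qed

lemma hensel:
  assumes D: "D = 1 \<or> D = 5" and m: "odd m"
    and URg: "\<forall>n. Us n \<in> Rg D" and Uu: "\<forall>n\<ge>1. unitR D (Us n)" and TRg: "\<forall>n. Ts n \<in> Rg D"
    and Uc: "\<forall>n. cg D n (Us (Suc n)) (Us n)" and Tc: "\<forall>n. cg D n (Ts (Suc n)) (Ts n)"
    and x0: "unitR D x0" and c0: "cg D 3 (Us 3 * x0 ^ (2*m) + Ts 3) 0"
  shows "\<exists>ys. (\<forall>n. unitR D (ys n)) \<and> (\<forall>n. cg D n (ys (Suc n)) (ys n)) \<and>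
           (\<forall>n. cg D n (Us n * ys n ^ (2*m) + Ts n) 0)"
proof -
  have D0: "D \<ge> 0" using D by auto
  define Y where "Y = hseq D m Us Ts x0"
  define P where "P n \<longleftrightarrow> unitR D (Y n) \<and> cg D (n+3) (Us (n+3) * Y n ^ (2*m) + Ts (n+3)) 0" for n
  have step: "P (Suc n) \<and> cg D (n+2) (Y (Suc n)) (Y n)" if Pn: "P n" for n
  proof -
    have yR: "Y n \<in> Rg D" using Pn unitR_Rg unfolding P_def by blast
    have e4: "Suc (n+3) = n+4" by simp
    have u: "cg D (n+3) (Us (n+4)) (Us (n+3))" using Uc[rule_format, of "n+3"] unfolding e4 .
    have t: "cg D (n+3) (Ts (n+4)) (Ts (n+3))" using Tc[rule_format, of "n+3"] unfolding e4 .
    have "cg D (n+3) (Us (n+4) * Y n ^ (2*m) + Ts (n+4)) (Us (n+3) * Y n ^ (2*m) + Ts (n+3))"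
      using D0 yR by (intro cg_lin[OF D0 _ u t]) auto
    then have c: "cg D (n+3) (Us (n+4) * Y n ^ (2*m) + Ts (n+4)) 0"
      using Pn unfolding P_def by (auto intro: cg_trans)
    have "\<exists>y'. y' \<in> Rg D \<and> unitR D y' \<and> cg D (n + 3 - 1) y' (Y n) \<and> cg D (n + 3 + 1) (Us (n+4) * y' ^ (2*m) + Ts (n+4)) 0"
      by (rule hstep[OF D m _ _ _ _ c]) (use Uu TRg Pn in \<open>auto simp: P_def\<close>)
    then have ex: "\<exists>y'. y' \<in> Rg D \<and> unitR D y' \<and> cg D (n+2) y' (Y n) \<and> cg D (n+4) (Us (n+4) * y' ^ (2*m) + Ts (n+4)) 0"
      by (simp add: numeral_eq_Suc)
    have "Y (Suc n) \<in> Rg D \<and> unitR D (Y (Suc n)) \<and> cg D (n+2) (Y (Suc n)) (Y n) \<and> cg D (n+4) (Us (n+4) * Y (Suc n) ^ (2*m) + Ts (n+4)) 0"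
      unfolding Y_def hseq.simps(2) using someI_ex[OF ex[unfolded Y_def]] by simp
    then show ?thesis unfolding P_def by (simp add: numeral_eq_Suc)
  qed
  have P: "P n" for n
  proof (induction n)
    case 0 show ?case using x0 c0 unfolding P_def Y_def by simp
  next
    case (Suc n) then show ?case using step by blast
  qed
  show ?thesis
  proof (intro exI[of _ Y] conjI allI)
    fix n show "unitR D (Y n)" using P unfolding P_def by blast
  next
    fix n
    have "cg D (n+2) (Y (Suc n)) (Y n)" using step P by blast
    then show "cg D n (Y (Suc n)) (Y n)" by (rule cg_mono[rotated]) simp
  next
    fix n
    have yR: "Y n \<in> Rg D" using P unitR_Rg unfolding P_def by blast
    have a: "cg D n (Us (n+3) * Y n ^ (2*m) + Ts (n+3)) 0"
      using P[of n] unfolding P_def by (auto intro: cg_mono[rotated])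
    have "cg D n (Us (n+3) * Y n ^ (2*m) + Ts (n+3)) (Us n * Y n ^ (2*m) + Ts n)"
      using coh_chain[OF Uc, of n 3] coh_chain[OF Tc, of n 3] D0 yR by (intro cg_lin) auto
    then show "cg D n (Us n * Y n ^ (2*m) + Ts n) 0" using a by (meson cg_sym cg_trans)
  qed
qed

lemma zpow2: "zpow D x 2 = zmul D x (zmul D x (1,0))" by (simp add: numeral_2_eq_2)
lemma zpow4: "zpow D x 4 = zmul D x (zmul D x (zmul D x (zmul D x (1,0))))" by (simp add: numeral_eq_Suc)

lemma fin_pair:
  assumes "D = 1 \<or> D = 5" "p0 \<in> {1,3,5,7}" "q0 \<in> {0,1}" "e \<in> {(1,0),(0,1)}"
  shows "\<exists>x\<in>{(1,0),(0,1),(1,2),(2,1)}. \<exists>W\<in>{0,1::int}. zcong 3 (zpow D x 4) (1,0) \<and>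
     zcong 3 (zpow D x 2) (p0 + 4*fst e*W, 4*q0 + 4*snd e*W)"
  using assms apply (elim disjE insertE emptyE)
  apply (simp_all add: zcong_def zmul_def zpow2 zpow4)
  done


lemma zcong_trans: assumes "zcong n a b" "zcong n b c" shows "zcong n a c"
proof -
  have "fst a - fst c = (fst a - fst b) + (fst b - fst c)" "snd a - snd c = (snd a - snd b) + (snd b - snd c)" by simp_all
  then show ?thesis using assms unfolding zcong_def by (metis dvd_add)
qed

lemma odd_mod8: "odd (p::int) \<Longrightarrow> p mod 8 \<in> {1,3,5,7}"
  by (auto, presburger)

lemma fin:
  assumes D: "D = 1 \<or> D = 5" and p: "odd p" and e: "e \<in> {(1,0),(0,1)}"
  shows "\<exists>x W. unitR D x \<and> W \<in> {0,1} \<and> cg D 3 (x^4) 1 \<and>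
     cg D 3 (x^2) (iota D (p + 4*fst e*W, 4*q + 4*snd e*W))"
proof -
  have D0: "D > 0" using D by auto
  have q0: "q mod 2 \<in> {0,1::int}" by auto
  from fin_pair[OF D odd_mod8[OF p] q0 e] obtain xp W where xp: "xp \<in> {(1,0),(0,1),(1,2),(2,1)}" "W \<in> {0,1::int}" "zcong 3 (zpow D xp 4) (1,0)"
     "zcong 3 (zpow D xp 2) (p mod 8 + 4*fst e*W, 4*(q mod 2) + 4*snd e*W)"
    by blast
  have "odd (fst xp + snd xp)" using xp(1) by auto
  then have u: "unitR D (iota D xp)" using unitR_iota[OF D0, of "fst xp" "snd xp"] by simp
  have i1: "iota D (1,0) = 1" by (simp add: iota_def)
  have c1: "cg D 3 ((iota D xp)^4) 1" using xp(3) unfolding zcong_iota[OF D0] iota_pow[OF less_imp_le[OF D0]] i1 .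
  have "zcong 3 (p mod 8 + 4*fst e*W, 4*(q mod 2) + 4*snd e*W) (p + 4*fst e*W, 4*q + 4*snd e*W)"
  proof -
    have "(8::int) dvd (p mod 8 - p)" by presburger
    moreover have "(8::int) dvd (4*(q mod 2) - 4*q)" by presburger
    ultimately show ?thesis unfolding zcong_def by simp
  qed
  then have "zcong 3 (zpow D xp 2) (p + 4*fst e*W, 4*q + 4*snd e*W)" using xp(4) zcong_trans by blast
  then have c2: "cg D 3 ((iota D xp)^2) (iota D (p + 4*fst e*W, 4*q + 4*snd e*W))"
    unfolding zcong_iota[OF D0] iota_pow[OF less_imp_le[OF D0]] .
  show ?thesis using u c1 c2 xp(2) by blast
qed

lemma pi4: assumes D: "D = 1 \<or> D = 5" shows "piD D ^ 4 = -4 - 4 * of_int (D-1) * bt D"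
proof -
  have D0: "D \<ge> 0" using D by auto
  have b2: "bt D * bt D = - of_int D" by (rule bt_sq[OF D0])
  have "piD D ^ 4 = 1 + 4 * bt D + 6 * (bt D * bt D) + 4 * (bt D * bt D) * bt D + (bt D * bt D) * (bt D * bt D)"
    unfolding piD_def by (simp add: algebra_simps power4_eq_xxxx numeral_eq_Suc)
  also have "\<dots> = (1 - 6 * of_int D + of_int D * of_int D) + 4 * (1 - of_int D) * bt D"
    unfolding b2 by (simp add: algebra_simps)
  also have "(1 - 6 * of_int D + of_int D * of_int D :: complex) = -4" using D by auto
  finally show ?thesis by (simp add: algebra_simps)
qed

lemma pi4_cg: assumes D: "D = 1 \<or> D = 5" and z: "z \<in> Rg D" shows "cg D 3 (piD D ^ 4 * z) (- 4 * z)"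
proof -
  have D0: "D \<ge> 0" using D by auto
  have h: "of_int (D - 1) = (2::complex) * of_int ((D - 1) div 2)" using D by auto
  have "piD D ^ 4 * z - (- 4 * z) = 2^3 * (- of_int ((D - 1) div 2) * bt D * z)"
    unfolding pi4[OF D] h by (simp add: algebra_simps)
  moreover have "- of_int ((D - 1) div 2) * bt D * z \<in> Rg D" using z D0 by simp
  ultimately show ?thesis unfolding cg_def by blast
qed

lemma cg_4: assumes "cg D 1 a b" shows "cg D 3 (4 * a) (4 * b)"
proof -
  from assms obtain z where z: "z \<in> Rg D" "a - b = 2 * z" unfolding cg_def by auto
  then have "4 * a - 4 * b = 2^3 * z" by (simp add: algebra_simps)
  then show ?thesis using z(1) unfolding cg_def by blast
qed

lemma cg_neg4: assumes "y \<in> Rg D" shows "cg D 3 (4 * y) (- 4 * y)"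
proof -
  have "4 * y - (- 4 * y) = 2^3 * y" by simp
  then show ?thesis using assms unfolding cg_def by blast
qed

lemma odd_sq8: "odd (n::int) \<Longrightarrow> \<exists>k. n * n = 1 + 8 * k"
proof -
  assume "odd n"
  then obtain a where a: "n = 2*a + 1" by (metis oddE)
  have "even (a * (a + 1))" by simp
  then obtain b where "a * (a+1) = 2 * b" by blast
  then have "n * n = 1 + 8 * b" unfolding a by (simp add: algebra_simps)
  then show ?thesis by blast
qed

lemma cg_unit_sq: assumes "odd (n::int)" "Y \<in> Rg D" shows "cg D 3 (- (of_int n * of_int n) * Y) (- Y)"
proof -
  obtain k where k: "n * n = 1 + 8 * k" using odd_sq8[OF assms(1)] by blast
  have "(of_int n * of_int n :: complex) = 1 + 8 * of_int k" using k by (metis of_int_1 of_int_add of_int_mult of_int_numeral)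
  then have "- (of_int n * of_int n) * Y - (- Y) = 2^3 * (- of_int k * Y)" by (simp add: algebra_simps)
  then show ?thesis using assms(2) unfolding cg_def by (metis Rg_scale Rg_uminus mult_minus_left)
qed


lemma mod8:
  assumes D: "D = 1 \<or> D = 5" and m: "odd m" and c: "c \<in> {0,1::int}"
    and pU: "aU mod 2 = (1 + c) mod 2" "bU mod 2 = c"
    and pV: "aV mod 2 = (1 + c) mod 2" "bV mod 2 = c"
    and d4: "4 dvd (aU * bV - aV * bU)" and G: "unitR D G"
  shows "\<exists>x W. unitR D x \<and> W \<in> {0,1::int} \<and>
     cg D 3 (iota D (aU,bU) * x^(2*m) + (iota D (aV,bV) + piD D^4 * G * of_int W)) 0"
proof -
  have D0: "D \<ge> 0" and D1: "D > 0" using D by auto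
  define U where "U = iota D (aU,bU)"
  define V where "V = iota D (aV,bV)"
  have URg: "U \<in> Rg D" and VRg: "V \<in> Rg D" unfolding U_def V_def by simp_all
  have GRg: "G \<in> Rg D" using G unitR_Rg by blast
  have "odd (aU + bU)" using pU c by (auto; presburger)
  then have Uu: "unitR D U" unfolding U_def using unitR_iota[OF D1] by simp
  obtain n where n: "odd n" "U * cnj U = of_int n" using unitR_norm[OF D Uu] by blast
  define r1 where "r1 = aU * aV + D * bU * bV"
  obtain q1 where q1: "aU * bV - aV * bU = 4 * q1" using d4 by (auto elim: dvdE)
  have r1o: "odd r1"
  proof -
    have "odd D" using D by auto
    then show ?thesis unfolding r1_def using pU pV c by (auto; presburger)
  qed
  have VcU: "V * cnj U = iota D (r1, 4 * q1)"
  proof -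
    have "V * cnj U = of_int aV * of_int aU + of_int bV * of_int bU * (- (bt D * bt D))
        + (of_int aU * of_int bV - of_int aV * of_int bU) * bt D"
      unfolding V_def U_def cnj_iota[OF D0] by (simp add: iota_def algebra_simps)
    also have "\<dots> = iota D (r1, aU * bV - aV * bU)"
      unfolding bt_sq[OF D0] r1_def by (simp add: iota_def algebra_simps)
    finally show ?thesis unfolding q1 .
  qed
  define p where "p = - n * r1"
  define q where "q = - n * q1"
  have po: "odd p" unfolding p_def using n(1) r1o by simp
  have rho': "- of_int n * (V * cnj U) = iota D (p, 4 * q)"
    unfolding VcU p_def q_def by (simp add: iota_def algebra_simps)
  define g where "g = - of_int n * cnj U * G"
  have gu: "unitR D g"
  proof -
    have "unitR D (iota D (- n, 0))" using unitR_iota[OF D1] n(1) by simp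
    then have "unitR D (- of_int n)" by (simp add: iota_def)
    then show ?thesis unfolding g_def using unitR_cnj[OF D Uu] G by (intro unitR_mult[OF D]) auto
  qed
  have gRg: "g \<in> Rg D" using gu unitR_Rg by blast
  obtain g1 g2 where g12: "g = iota D (g1, g2)" "odd (g1 + g2)" using gu unfolding unitR_def by blast
  define e :: zalpha where "e = (if odd g1 then (1,0) else (0,1))"
  have e: "e \<in> {(1,0),(0,1)}" unfolding e_def by auto
  have ge: "cg D 1 g (iota D e)"
  proof -
    have "zcong 1 (g1, g2) e" unfolding e_def zcong_def using g12(2) by auto
    then show ?thesis unfolding g12(1) zcong_iota[OF D1] .
  qed
  obtain x W where xW: "unitR D x" "W \<in> {0,1::int}" "cg D 3 (x^4) 1"
      "cg D 3 (x^2) (iota D (p + 4*fst e*W, 4*q + 4*snd e*W))"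
    using fin[OF D po e, of q] by blast
  have xRg: "x \<in> Rg D" using xW(1) unitR_Rg by blast
  have ie: "iota D (p + 4*fst e*W, 4*q + 4*snd e*W) = iota D (p, 4*q) + of_int W * (4 * iota D e)"
    by (simp add: iota_def algebra_simps)
  have s1: "cg D 3 (of_int W * (4 * iota D e)) (of_int W * (piD D ^ 4 * g))"
  proof -
    have "cg D 3 (4 * iota D e) (4 * g)" using cg_4[OF cg_sym[OF ge]] .
    moreover have "cg D 3 (4 * g) (- 4 * g)" by (rule cg_neg4[OF gRg])
    moreover have "cg D 3 (- 4 * g) (piD D ^ 4 * g)" by (rule cg_sym[OF pi4_cg[OF D gRg]])
    ultimately have "cg D 3 (4 * iota D e) (piD D ^ 4 * g)" using cg_trans by blast
    then show ?thesis by (rule cg_multL[OF D0 Rg_of_int])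
  qed
  have s2: "cg D 3 (x^2) (iota D (p, 4*q) + of_int W * (piD D ^ 4 * g))"
    using cg_trans[OF xW(4)[unfolded ie] cg_add[OF cg_refl s1]] .
  define Y where "Y = V + piD D^4 * G * of_int W"
  have YRg: "Y \<in> Rg D" unfolding Y_def using VRg GRg D0 by simp
  have s3: "U * (iota D (p, 4*q) + of_int W * (piD D ^ 4 * g)) = - (of_int n * of_int n) * Y"
  proof -
    have "U * (iota D (p, 4*q) + of_int W * (piD D ^ 4 * g))
       = - of_int n * (U * cnj U) * (V + piD D^4 * G * of_int W)"
      unfolding rho'[symmetric] g_def by (simp add: algebra_simps)
    then show ?thesis unfolding n(2) Y_def by simp
  qed
  have s4: "cg D 3 (U * x^2) (- Y)"
  proof -
    have "cg D 3 (U * x^2) (U * (iota D (p, 4*q) + of_int W * (piD D ^ 4 * g)))"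
      by (rule cg_multL[OF D0 URg s2])
    then show ?thesis unfolding s3 using cg_unit_sq[OF n(1) YRg] cg_trans by blast
  qed
  obtain k where k: "m = 2 * k + 1" using m by (metis oddE)
  have s5: "cg D 3 (x^(2*m)) (x^2)"
  proof -
    have "x^(2*m) = x^2 * (x^4)^k" unfolding k by (simp add: power_add power_mult[symmetric] algebra_simps power2_eq_square)
    moreover have "cg D 3 ((x^4)^k) (1^k)" by (rule cg_pow[OF D0 _ _ xW(3)]) (use xRg D0 in auto)
    ultimately show ?thesis using cg_multL[OF D0 Rg_pow[OF D0 xRg, of 2]] by fastforce
  qed
  have "cg D 3 (U * x^(2*m) + Y) (- Y + Y)"
    using cg_add[OF cg_trans[OF cg_multL[OF D0 URg s5] s4] cg_refl] .
  then have "cg D 3 (U * x^(2*m) + Y) 0" by simp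
  then show ?thesis using xW(1,2) unfolding U_def Y_def V_def by blast
qed

definition toZ :: "int \<Rightarrow> complex \<Rightarrow> zalpha" where "toZ D z = (SOME p. z = iota D p)"
lemma toZ: "z \<in> Rg D \<Longrightarrow> iota D (toZ D z) = z"
  unfolding toZ_def Rg_def by (metis (mono_tags, lifting) rangeE someI_ex)

lemma O_eq_cg: "D > 0 \<Longrightarrow> O_eq x y \<longleftrightarrow> (\<forall>n. cg D n (iota D (x n)) (iota D (y n)))"
  unfolding O_eq_def using zcong_iota by blast
lemma in_O_cg: "D > 0 \<Longrightarrow> in_O x \<longleftrightarrow> (\<forall>n. cg D n (iota D (x (Suc n))) (iota D (x n)))"
  unfolding in_O_def using zcong_iota by blast

lemma iota_O_mul: "D \<ge> 0 \<Longrightarrow> iota D (O_mul D x y n) = iota D (x n) * iota D (y n)"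
  by (simp add: O_mul_def iota_mul)
lemma iota_O_pow: "D \<ge> 0 \<Longrightarrow> iota D (O_pow D x k n) = iota D (x n) ^ k"
  by (simp add: O_pow_def iota_pow)
lemma iota_O_pi: "iota D (O_pi n) = piD D" by (simp add: O_pi_def O_of_def piD_iota)
lemma iota_O_add: "iota D (O_add x y n) = iota D (x n) + iota D (y n)"
  by (simp add: O_add_def iota_add)
lemma iota_O_sub: "iota D (O_sub x y n) = iota D (x n) - iota D (y n)"
  by (simp add: O_sub_def iota_sub)
lemma iota_O_of: "iota D (O_of p n) = iota D p" by (simp add: O_of_def)

lemma level_unpack:
  assumes D: "D = 1 \<or> D = 5" and lc: "level_coeff D d A k c"
  shows "\<exists>r u. r mod d = k mod d \<and> in_O u \<and> (\<forall>n. cg D n (iota D (A n)) (piD D ^ r * iota D (u n)))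
     \<and> (\<forall>n\<ge>1. unitR D (iota D (u n))) \<and> c \<in> {0,1}
     \<and> fst (u 3) mod 2 = (1 + c) mod 2 \<and> snd (u 3) mod 2 = c"
proof -
  have D0: "D \<ge> 0" and D1: "D > 0" using D by auto
  obtain r u w where c: "c \<in> {0,1}" and u: "in_O u" "in_O w" "r mod d = k mod d"
    "O_eq A (O_mul D (O_pow D O_pi r) u)"
    "O_eq (O_sub u (O_add O_one (O_mul D (O_of (c, 0)) O_pi))) (O_mul D (O_pow D O_pi 2) w)"
    using lc unfolding level_coeff_def by blast
  have a: "\<forall>n. cg D n (iota D (A n)) (piD D ^ r * iota D (u n))"
    using u(4) unfolding O_eq_cg[OF D1] iota_O_mul[OF D0] iota_O_pow[OF D0] iota_O_pi .
  have one: "iota D (O_one n) = 1" for n by (simp add: O_one_def O_of_def iota_def)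
  have cc: "iota D (O_add O_one (O_mul D (O_of (c, 0)) O_pi) n) = iota D (1 + c, c)" for n
    unfolding iota_O_add iota_O_mul[OF D0] one iota_O_of iota_O_pi by (simp add: iota_def piD_def algebra_simps)
  have b: "\<forall>n. cg D n (iota D (u n) - iota D (1 + c, c)) (piD D ^ 2 * iota D (w n))"
    using u(5) unfolding O_eq_cg[OF D1] iota_O_sub cc iota_O_mul[OF D0] iota_O_pow[OF D0] iota_O_pi .
  have p2: "piD D ^ 2 = 2 * iota D ((1 - D) div 2, 1)"
  proof -
    have "piD D ^ 2 = (1 - of_int D) + 2 * bt D"
      unfolding piD_def using bt_sq[OF D0] by (simp add: algebra_simps power2_eq_square)
    moreover have "(1 - of_int D :: complex) = 2 * of_int ((1 - D) div 2)" using D by auto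
    ultimately show ?thesis by (simp add: iota_def algebra_simps)
  qed
  have m2: "cg D 1 (iota D (u n)) (iota D (1 + c, c))" if "n \<ge> 1" for n
  proof -
    have "cg D 1 (iota D (u n) - iota D (1 + c, c)) (piD D ^ 2 * iota D (w n))"
      using b cg_mono[OF that] by blast
    moreover have "cg D 1 (piD D ^ 2 * iota D (w n)) 0"
      unfolding cg_def p2 using D0 by (intro bexI[of _ "iota D ((1 - D) div 2, 1) * iota D (w n)"]) auto
    ultimately have "cg D 1 (iota D (u n) - iota D (1 + c, c)) 0" using cg_trans by blast
    then show ?thesis using cg_0 by blast
  qed
  have un: "unitR D (iota D (u n))" if "n \<ge> 1" for n
  proof -
    have "odd (1 + c + c)" by simp
    then have "unitR D (iota D (1 + c, c))" using unitR_iota[OF D1] by simp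
    then show ?thesis using unitR_cg[OF D _ _ cg_sym[OF m2[OF that]]] by simp
  qed
  have "zcong 1 (u 3) (1 + c, c)" using m2[of 3] zcong_iota[OF D1] by simp
  then have "even (fst (u 3) - (1 + c))" "even (snd (u 3) - c)" unfolding zcong_def by auto
  then have "fst (u 3) mod 2 = (1 + c) mod 2" "snd (u 3) mod 2 = c" using c by (auto; presburger)+
  moreover have "\<forall>n\<ge>1. unitR D (iota D (u n))" using un by blast
  ultimately show ?thesis using a u(1,3) c by (intro exI[of _ r] exI[of _ u]) blast
qed

lemma val_lt:
  assumes D: "D = 1 \<or> D = 5" and lt: "r < r'"
    and u: "unitR D (u (r+1))" and u': "u' (r+1) \<in> Rg D"
    and eq: "cg D (r+1) (piD D ^ r * u (r+1)) (piD D ^ r' * u' (r+1))"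
  shows False
proof -
  have D0: "D \<ge> 0" using D by auto
  define s where "s = r' - r"
  have r': "r' = r + s" and s: "s \<ge> 1" using lt unfolding s_def by auto
  have uR: "u (r+1) \<in> Rg D" using u unitR_Rg by blast
  have "piD D ^ r * u (r+1) - piD D ^ r' * u' (r+1) = piD D ^ r * (u (r+1) - piD D ^ s * u' (r+1))"
    unfolding r' by (simp add: power_add algebra_simps)
  then have "cg D (r+1) (piD D ^ r * (u (r+1) - piD D ^ s * u' (r+1))) 0" using eq cg_0 by metis
  then have "cg D 1 (u (r+1) - piD D ^ s * u' (r+1)) 0" using pi_cancel[OF D] uR u' D0 by simp
  then have "cg D 1 (u (r+1)) (piD D ^ s * u' (r+1))" using cg_0 by blast
  then have "unitR D (piD D ^ s * u' (r+1))" using unitR_cg[OF D u] u' D0 by simp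
  moreover have "piD D ^ s * u' (r+1) = piD D * (piD D ^ (s - 1) * u' (r+1))"
    using s by (metis (no_types, lifting) mult.assoc power_eq_if not_one_le_zero)
  moreover have "piD D ^ (s - 1) * u' (r+1) \<in> Rg D" using u' D0 by simp
  ultimately show False using not_unit_pi[OF D] by metis
qed

lemma pig_pair:
  assumes c: "c \<in> {0,1::int}" and pa: "ai mod 2 = (1 + c) mod 2" "bi mod 2 = c"
    and pb: "aj mod 2 = (1 + c) mod 2" "bj mod 2 = c"
    and key: "(if c = 0 then bi div 2 else ai div 2) mod 2 = (if c = 0 then bj div 2 else aj div 2) mod 2"
  shows "4 dvd (ai * bj - aj * bi)"
proof (cases "c = 0")
  case True
  then have "odd ai" "odd aj" "bi = 2 * (bi div 2)" "bj = 2 * (bj div 2)" using pa pb by (auto; presburger)+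
  moreover have "(bi div 2) mod 2 = (bj div 2) mod 2" using key True by simp
  ultimately show ?thesis
  proof -
    assume h: "odd ai" "odd aj" "bi = 2 * (bi div 2)" "bj = 2 * (bj div 2)" "(bi div 2) mod 2 = (bj div 2) mod 2"
    obtain x y where xy: "bi div 2 = x" "bj div 2 = y" by blast
    obtain p q where pq: "ai = 2*p+1" "aj = 2*q+1" using h(1,2) by (metis oddE)
    have e1: "ai * bj - aj * bi = 2 * (2 * (p * y - q * x) + (y - x))" using h(3,4) pq xy by (simp add: algebra_simps)
    have "even (y - x)" using h(5) xy by presburger
    then obtain t where "y - x = 2 * t" by blast
    then have "ai * bj - aj * bi = 4 * (p * y - q * x + t)" unfolding e1 by simp
    then show ?thesis by simp
  qed
next
  case False
  then have c1: "c = 1" using c by auto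
  then have h: "odd bi" "odd bj" "ai = 2 * (ai div 2)" "aj = 2 * (aj div 2)" using pa pb by (auto; presburger)+
  have h5: "(ai div 2) mod 2 = (aj div 2) mod 2" using key c1 by simp
  obtain x y where xy: "ai div 2 = x" "aj div 2 = y" by blast
  obtain p q where pq: "bi = 2*p+1" "bj = 2*q+1" using h(1,2) by (metis oddE)
  have e1: "ai * bj - aj * bi = 2 * (2 * (x * q - y * p) + (x - y))"
    using h(3,4) pq xy by (simp add: algebra_simps)
  have "even (x - y)" using h5 xy by presburger
  then obtain t where "x - y = 2 * t" by blast
  then have "ai * bj - aj * bi = 4 * (x * q - y * p + t)" unfolding e1 by simp
  then show ?thesis by simp
qed


lemma pig3:
  fixes k1 k2 k3 :: int
  shows "k1 mod 2 = k2 mod 2 \<or> k1 mod 2 = k3 mod 2 \<or> k2 mod 2 = k3 mod 2"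
  by presburger

lemma mod_sub_ex: fixes a b d :: nat assumes "a mod d = b mod d" "b \<le> a" shows "\<exists>t. d * t + b = a"
proof -
  have "d dvd a - b" using assms mod_eq_dvd_iff_nat by metis
  then obtain t where "a - b = d * t" by blast
  then show ?thesis using assms(2) by (intro exI[of _ t]) simp
qed

lemma scale:
  fixes d rP rQ r4 k :: nat
  assumes "d > 0" "rP mod d = k mod d" "rQ mod d = k mod d" "r4 mod d = (k + 4) mod d"
  shows "\<exists>N tP tQ t4. d * tP + rP = N \<and> d * tQ + rQ = N \<and> d * t4 + r4 = N + 4"
proof -
  define N where "N = rP + d * (rQ + r4)"
  have "N mod d = rP mod d" unfolding N_def by simp
  then have "N mod d = rQ mod d" using assms by simp
  moreover have "rQ \<le> d * rQ" "r4 \<le> d * r4" using assms(1) by simp_all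
  then have "rQ \<le> N" "r4 \<le> N + 4" unfolding N_def distrib_left by linarith+
  ultimately obtain tQ where tQ: "d * tQ + rQ = N" using mod_sub_ex by blast
  have "N + 4 = (rP + 4) + d * (rQ + r4)" unfolding N_def by simp
  then have "(N + 4) mod d = (rP + 4) mod d" by (metis mod_mult_self2)
  also have "\<dots> = (k + 4) mod d" using assms(2) by (metis mod_add_left_eq)
  finally have "(N + 4) mod d = r4 mod d" using assms(4) by simp
  then obtain t4 where t4: "d * t4 + r4 = N + 4" using mod_sub_ex \<open>r4 \<le> N + 4\<close> by blast
  have "d * (rQ + r4) + rP = N" unfolding N_def by simp
  then show ?thesis using tQ t4 by blast
qed

lemma foldr_diag:
  assumes D0: "D \<ge> 0" and x0: "\<forall>i. snd (x i) = 0"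
  shows "snd (foldr (\<lambda>i acc. K_add D (K_mul D (K_of_O (a i)) (K_pow D (x i) d)) acc) L K_zero) = 0 \<and>
    (\<forall>n. iota D (fst (foldr (\<lambda>i acc. K_add D (K_mul D (K_of_O (a i)) (K_pow D (x i) d)) acc) L K_zero) n)
       = (\<Sum>i\<leftarrow>L. iota D (a i n) * iota D (fst (x i) n) ^ d))"
proof (induction L)
  case Nil show ?case by (simp add: K_zero_def O_zero_def O_of_def iota_def)
next
  case (Cons i L)
  have one: "iota D (O_pow D O_two 0 n) = 1" for n by (simp add: O_pow_def iota_def)
  show ?case using Cons x0
    by (simp add: K_add_def K_mul_def K_of_O_def K_pow_def iota_O_add iota_O_mul[OF D0] iota_O_pow[OF D0] one)
qed

lemma diag_iota:
  assumes D0: "D \<ge> 0" and x0: "\<forall>i. snd (x i) = 0"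
  shows "snd (diag_form D d a s x) = 0 \<and>
    (\<forall>n. iota D (fst (diag_form D d a s x) n) = (\<Sum>i<s. iota D (a i n) * iota D (fst (x i) n) ^ d))"
  using foldr_diag[OF D0 x0, of a d "[0..<s]"] unfolding diag_form_def
  by (simp add: atLeast0LessThan[symmetric] sum_set_upt_conv_sum_list_nat[symmetric])

lemma K_eq_zero:
  assumes D1: "D > 0" and s0: "snd F = 0" and c: "\<forall>n. cg D n (iota D (fst F n)) 0"
  shows "K_eq D F K_zero"
proof -
  have D0: "D \<ge> 0" using D1 by simp
  have one: "iota D (O_pow D O_two 0 n) = 1" for n by (simp add: O_pow_def iota_def)
  have z: "iota D (O_zero n) = 0" for n by (simp add: O_zero_def O_of_def iota_def)
  show ?thesis unfolding K_eq_def K_zero_def O_eq_cg[OF D1] using s0 c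
    by (simp add: iota_O_mul[OF D0] one z)
qed

lemma cg_multR: "D \<ge> 0 \<Longrightarrow> w \<in> Rg D \<Longrightarrow> cg D n x y \<Longrightarrow> cg D n (x * w) (y * w)"
  using cg_multL[of D w n x y] by (simp add: mult.commute)

lemma core:
  assumes D: "D = 1 \<or> D = 5" and m: "odd m" "m \<ge> 3"
    and idx: "P < s" "Q < s" "j < s" "P \<noteq> Q" "P \<noteq> j" "Q \<noteq> j"
    and uP: "in_O uP" "\<forall>n. cg D n (iota D (a P n)) (piD D ^ rP * iota D (uP n))" "\<forall>n\<ge>1. unitR D (iota D (uP n))"
    and uQ: "in_O uQ" "\<forall>n. cg D n (iota D (a Q n)) (piD D ^ rQ * iota D (uQ n))" "\<forall>n\<ge>1. unitR D (iota D (uQ n))"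
    and u4: "in_O u4" "\<forall>n. cg D n (iota D (a j n)) (piD D ^ r4 * iota D (u4 n))" "\<forall>n\<ge>1. unitR D (iota D (u4 n))"
    and lev: "rP mod (2*m) = k mod (2*m)" "rQ mod (2*m) = k mod (2*m)" "r4 mod (2*m) = (k + 4) mod (2*m)"
    and c: "c \<in> {0,1::int}"
    and par: "fst (uP 3) mod 2 = (1 + c) mod 2" "snd (uP 3) mod 2 = c"
             "fst (uQ 3) mod 2 = (1 + c) mod 2" "snd (uQ 3) mod 2 = c"
    and d4: "4 dvd (fst (uP 3) * snd (uQ 3) - fst (uQ 3) * snd (uP 3))"
  shows "\<exists>x :: nat \<Rightarrow> Kelt. (\<forall>i<s. in_O (fst (x i))) \<and> (\<exists>i<s. \<not> O_eq (fst (x i)) O_zero) \<and>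
           K_eq D (diag_form D (2*m) a s x) K_zero"
proof -
  have D0: "D \<ge> 0" and D1: "D > 0" using D by auto
  define d where "d = 2 * m"
  have dpos: "d > 0" unfolding d_def using m by simp
  obtain N tP tQ t4 where sc: "d * tP + rP = N" "d * tQ + rQ = N" "d * t4 + r4 = N + 4"
    using scale[OF dpos lev[folded d_def]] by blast
  define G where "G = iota D (u4 3)"
  have Gu: "unitR D G" unfolding G_def using u4(3) by simp
  obtain x0 W where xW: "unitR D x0" "W \<in> {0,1::int}"
    "cg D 3 (iota D (fst (uP 3), snd (uP 3)) * x0^(2*m) + (iota D (fst (uQ 3), snd (uQ 3)) + piD D^4 * G * of_int W)) 0"
    using mod8[OF D m(1) c par d4 Gu] by blast
  define Us where "Us n = iota D (uP n)" for n
  define Ts where "Ts n = iota D (uQ n) + piD D^4 * iota D (u4 n) * of_int W" for n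
  have URg: "\<forall>n. Us n \<in> Rg D" unfolding Us_def by simp
  have TRg: "\<forall>n. Ts n \<in> Rg D" unfolding Ts_def using D0 by simp
  have Uu: "\<forall>n\<ge>1. unitR D (Us n)" unfolding Us_def using uP(3) by simp
  have Uc: "\<forall>n. cg D n (Us (Suc n)) (Us n)" unfolding Us_def using uP(1) in_O_cg[OF D1] by blast
  have Tc: "\<forall>n. cg D n (Ts (Suc n)) (Ts n)"
  proof
    fix n
    have a: "cg D n (iota D (uQ (Suc n))) (iota D (uQ n))" using uQ(1) in_O_cg[OF D1] by blast
    have b: "cg D n (iota D (u4 (Suc n))) (iota D (u4 n))" using u4(1) in_O_cg[OF D1] by blast
    have "cg D n (piD D^4 * iota D (u4 (Suc n))) (piD D^4 * iota D (u4 n))"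
      by (rule cg_multL[OF D0 _ b]) (use D0 in simp)
    then have "cg D n (piD D^4 * iota D (u4 (Suc n)) * of_int W) (piD D^4 * iota D (u4 n) * of_int W)"
      by (rule cg_multR[OF D0 Rg_of_int])
    then show "cg D n (Ts (Suc n)) (Ts n)" unfolding Ts_def by (rule cg_add[OF a])
  qed
  have c3: "cg D 3 (Us 3 * x0 ^ (2*m) + Ts 3) 0" using xW(3) unfolding Us_def Ts_def G_def by simp
  obtain ys where ys: "\<forall>n. unitR D (ys n)" "\<forall>n. cg D n (ys (Suc n)) (ys n)"
      "\<forall>n. cg D n (Us n * ys n ^ (2*m) + Ts n) 0"
    using hensel[OF D m(1) URg Uu TRg Uc Tc xW(1) c3] by blast
  have ysR: "ys n \<in> Rg D" for n using ys(1) unitR_Rg by blast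
  define oP where "oP = (\<lambda>n. toZ D (piD D ^ tP * ys n))"
  define oQ where "oQ = (\<lambda>n::nat. toZ D (piD D ^ tQ))"
  define o4 where "o4 = (\<lambda>n::nat. toZ D (piD D ^ t4 * of_int W))"
  have ioP: "iota D (oP n) = piD D ^ tP * ys n" for n unfolding oP_def using ysR D0 by (simp add: toZ)
  have ioQ: "iota D (oQ n) = piD D ^ tQ" for n unfolding oQ_def using D0 by (simp add: toZ)
  have io4: "iota D (o4 n) = piD D ^ t4 * of_int W" for n unfolding o4_def using D0 by (simp add: toZ)
  define x :: "nat \<Rightarrow> Kelt" where "x i = (if i = P then oP else if i = Q then oQ else if i = j then o4 else O_zero, 0)" for i
  have x0s: "\<forall>i. snd (x i) = 0" unfolding x_def by simp
  have inO: "\<forall>i<s. in_O (fst (x i))"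
  proof (intro allI impI)
    fix i assume "i < s"
    have "cg D n (iota D (fst (x i) (Suc n))) (iota D (fst (x i) n))" for n
    proof -
      have "cg D n (piD D ^ tP * ys (Suc n)) (piD D ^ tP * ys n)"
        by (rule cg_multL[OF D0 _ ys(2)[rule_format]]) (use D0 in simp)
      then show ?thesis unfolding x_def using ioP ioQ io4 by (auto simp: O_zero_def O_of_def)
    qed
    then show "in_O (fst (x i))" using in_O_cg[OF D1] by blast
  qed
  have nz: "\<not> O_eq (fst (x P)) O_zero"
  proof
    assume "O_eq (fst (x P)) O_zero"
    then have "cg D (tP + 1) (iota D (oP (tP + 1))) (iota D (O_zero (tP + 1)))"
      unfolding x_def O_eq_cg[OF D1] by simp
    then have "cg D (tP + 1) (piD D ^ tP * ys (tP + 1)) 0" unfolding ioP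
      by (simp add: O_zero_def O_of_def iota_def)
    then have "cg D 1 (ys (tP + 1)) 0" using pi_cancel[OF D ysR] by blast
    then show False using not_unit_0[OF D] ys(1) by blast
  qed
  have sumc: "cg D n (\<Sum>i<s. iota D (a i n) * iota D (fst (x i) n) ^ (2*m)) 0" for n
  proof -
    define f where "f i = iota D (a i n) * iota D (fst (x i) n) ^ (2*m)" for i
    have "sum f {..<s} = sum f {P, Q, j}"
    proof (rule sum.mono_neutral_right)
      show "finite {..<s}" by simp
      show "{P, Q, j} \<subseteq> {..<s}" using idx by auto
      show "\<forall>i\<in>{..<s} - {P, Q, j}. f i = 0" unfolding f_def x_def using m
        by (auto simp: O_zero_def O_of_def iota_def)
    qed
    also have "\<dots> = f P + f Q + f j" using idx by (simp add: add.assoc)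
    finally have sf: "sum f {..<s} = f P + f Q + f j" .
    have fP: "cg D n (f P) (piD D ^ N * (Us n * ys n ^ (2*m)))"
    proof -
      have "cg D n (f P) (piD D ^ rP * iota D (uP n) * (piD D ^ tP * ys n) ^ (2*m))"
        unfolding f_def x_def using idx ioP by simp (rule cg_multR[OF D0 _ uP(2)[rule_format]], use D0 ysR in simp)
      moreover have "piD D ^ rP * iota D (uP n) * (piD D ^ tP * ys n) ^ (2*m) = piD D ^ N * (Us n * ys n ^ (2*m))"
      proof -
        have e1: "(piD D ^ tP) ^ (2*m) = piD D ^ (2*m*tP)" by (simp add: power_mult[symmetric] mult.commute)
        have pN: "piD D ^ N = piD D ^ (2*m*tP) * piD D ^ rP" unfolding sc(1)[symmetric] d_def by (simp add: power_add)
        show ?thesis unfolding Us_def pN power_mult_distrib e1 by (simp add: algebra_simps)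
      qed
      ultimately show ?thesis by simp
    qed
    have fQ: "cg D n (f Q) (piD D ^ N * iota D (uQ n))"
    proof -
      have "cg D n (f Q) (piD D ^ rQ * iota D (uQ n) * (piD D ^ tQ) ^ (2*m))"
        unfolding f_def x_def using idx ioQ by simp (rule cg_multR[OF D0 _ uQ(2)[rule_format]], use D0 in simp)
      moreover have "piD D ^ rQ * iota D (uQ n) * (piD D ^ tQ) ^ (2*m) = piD D ^ N * iota D (uQ n)"
      proof -
        have e1: "(piD D ^ tQ) ^ (2*m) = piD D ^ (2*m*tQ)" by (simp add: power_mult[symmetric] mult.commute)
        have pN: "piD D ^ N = piD D ^ (2*m*tQ) * piD D ^ rQ" unfolding sc(2)[symmetric] d_def by (simp add: power_add)
        show ?thesis unfolding pN e1 by (simp add: algebra_simps)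
      qed
      ultimately show ?thesis by simp
    qed
    have Wd: "(of_int W :: complex) ^ (2*m) = of_int W" using xW(2) dpos d_def by auto
    have f4: "cg D n (f j) (piD D ^ N * (piD D^4 * iota D (u4 n) * of_int W))"
    proof -
      have "cg D n (f j) (piD D ^ r4 * iota D (u4 n) * (piD D ^ t4 * of_int W) ^ (2*m))"
        unfolding f_def x_def using idx io4 by simp (rule cg_multR[OF D0 _ u4(2)[rule_format]], use D0 in simp)
      moreover have "piD D ^ r4 * iota D (u4 n) * (piD D ^ t4 * of_int W) ^ (2*m)
          = piD D ^ (d * t4 + r4) * iota D (u4 n) * (of_int W) ^ (2*m)"
      proof -
        have e1: "(piD D ^ t4) ^ (2*m) = piD D ^ (2*m*t4)" by (simp add: power_mult[symmetric] mult.commute)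
        have pN: "piD D ^ (d * t4 + r4) = piD D ^ (2*m*t4) * piD D ^ r4" unfolding d_def by (simp add: power_add)
        show ?thesis unfolding pN power_mult_distrib e1 by (simp add: algebra_simps)
      qed
      moreover have "\<dots> = piD D ^ N * (piD D^4 * iota D (u4 n) * of_int W)"
        unfolding sc(3) Wd by (simp add: power_add algebra_simps)
      ultimately show ?thesis by simp
    qed
    have "cg D n (f P + f Q + f j) (piD D ^ N * (Us n * ys n ^ (2*m)) + piD D ^ N * iota D (uQ n) + piD D ^ N * (piD D^4 * iota D (u4 n) * of_int W))"
      by (intro cg_add fP fQ f4)
    moreover have "piD D ^ N * (Us n * ys n ^ (2*m)) + piD D ^ N * iota D (uQ n) + piD D ^ N * (piD D^4 * iota D (u4 n) * of_int W)
        = piD D ^ N * (Us n * ys n ^ (2*m) + Ts n)" unfolding Ts_def by (simp add: algebra_simps)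
    moreover have "cg D n (piD D ^ N * (Us n * ys n ^ (2*m) + Ts n)) (piD D ^ N * 0)"
      by (rule cg_multL[OF D0 _ ys(3)[rule_format]]) (use D0 in simp)
    ultimately have "cg D n (f P + f Q + f j) 0" using cg_trans by fastforce
    then show ?thesis using sf unfolding f_def by simp
  qed
  have "K_eq D (diag_form D (2*m) a s x) K_zero"
    using diag_iota[OF D0 x0s, of "2*m" a s] sumc by (intro K_eq_zero[OF D1]) auto
  then show ?thesis using inO nz idx by blast
qed

lemma lev_ne: fixes k d :: nat assumes "d \<ge> 6" shows "(k + 4) mod d \<noteq> k mod d"
proof
  assume "(k + 4) mod d = k mod d"
  then have "d dvd (k + 4) - k" using mod_eq_dvd_iff_nat[of k "k+4" d] by simp
  then have "d dvd 4" by simp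
  then have "d \<le> 4" by (rule dvd_imp_le) simp
  then show False using assms by simp
qed

lemma distinct_lev:
  assumes D: "D = 1 \<or> D = 5" and m: "m \<ge> 3"
    and a1: "\<forall>n. cg D n (iota D (A n)) (piD D ^ r * iota D (u n))" "\<forall>n\<ge>1. unitR D (iota D (u n))"
    and a2: "\<forall>n. cg D n (iota D (A n)) (piD D ^ r' * iota D (u' n))" "\<forall>n\<ge>1. unitR D (iota D (u' n))"
    and l: "r mod (2*m) = k mod (2*m)" "r' mod (2*m) = (k + 4) mod (2*m)"
  shows False
proof -
  have "r \<noteq> r'" using l lev_ne[of "2*m" k] m by auto
  then consider "r < r'" | "r' < r" by linarith
  then show False
  proof cases
    case 1
    have "cg D (r+1) (piD D ^ r * iota D (u (r+1))) (piD D ^ r' * iota D (u' (r+1)))"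
      using a1(1) a2(1) by (meson cg_sym cg_trans)
    then show False using val_lt[OF D 1, of "\<lambda>n. iota D (u n)" "\<lambda>n. iota D (u' n)"] a1(2) by simp
  next
    case 2
    have "cg D (r'+1) (piD D ^ r' * iota D (u' (r'+1))) (piD D ^ r * iota D (u (r'+1)))"
      using a1(1) a2(1) by (meson cg_sym cg_trans)
    then show False using val_lt[OF D 2, of "\<lambda>n. iota D (u' n)" "\<lambda>n. iota D (u n)"] a2(2) by simp
  qed
qed


theorem lemma7:
  fixes D :: int and m s k :: nat and a :: "nat \<Rightarrow> Oelt" and c :: int
  assumes "D = 1 \<or> D = 5"
    and "odd m" and "m \<ge> 3"
    and "\<forall>i<s. in_O (a i) \<and> \<not> O_eq (a i) O_zero"
    and "\<exists>i1 i2 i3. i1 < s \<and> i2 < s \<and> i3 < s \<and> i1 \<noteq> i2 \<and> i1 \<noteq> i3 \<and> i2 \<noteq> i3 \<and>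
           level_coeff D (2*m) (a i1) k c \<and> level_coeff D (2*m) (a i2) k c \<and>
           level_coeff D (2*m) (a i3) k c"
    and "\<exists>j<s. at_level D (2*m) (a j) (k + 4)"
  shows "\<exists>x :: nat \<Rightarrow> Kelt. (\<forall>i<s. in_O (fst (x i))) \<and> (\<exists>i<s. \<not> O_eq (fst (x i)) O_zero) \<and>
           K_eq D (diag_form D (2*m) a s x) K_zero"
proof -
  note D = assms(1) and m = assms(2,3)
  obtain i1 i2 i3 where idx: "i1 < s" "i2 < s" "i3 < s" "i1 \<noteq> i2" "i1 \<noteq> i3" "i2 \<noteq> i3"
    and lc: "level_coeff D (2*m) (a i1) k c" "level_coeff D (2*m) (a i2) k c" "level_coeff D (2*m) (a i3) k c"
    using assms(5) by blast
  obtain j c4 where j: "j < s" and lc4: "level_coeff D (2*m) (a j) (k + 4) c4"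
    using assms(6) unfolding at_level_def by blast
  obtain r1 u1 where U1: "r1 mod (2*m) = k mod (2*m)" "in_O u1" "\<forall>n. cg D n (iota D (a i1 n)) (piD D ^ r1 * iota D (u1 n))"
     "\<forall>n\<ge>1. unitR D (iota D (u1 n))" "c \<in> {0,1}" "fst (u1 3) mod 2 = (1 + c) mod 2" "snd (u1 3) mod 2 = c"
    using level_unpack[OF D lc(1)] by (elim exE conjE) (rule that; assumption)
  obtain r2 u2 where U2: "r2 mod (2*m) = k mod (2*m)" "in_O u2" "\<forall>n. cg D n (iota D (a i2 n)) (piD D ^ r2 * iota D (u2 n))"
     "\<forall>n\<ge>1. unitR D (iota D (u2 n))" "fst (u2 3) mod 2 = (1 + c) mod 2" "snd (u2 3) mod 2 = c"
    using level_unpack[OF D lc(2)] by (elim exE conjE) (rule that; assumption)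
  obtain r3 u3 where U3: "r3 mod (2*m) = k mod (2*m)" "in_O u3" "\<forall>n. cg D n (iota D (a i3 n)) (piD D ^ r3 * iota D (u3 n))"
     "\<forall>n\<ge>1. unitR D (iota D (u3 n))" "fst (u3 3) mod 2 = (1 + c) mod 2" "snd (u3 3) mod 2 = c"
    using level_unpack[OF D lc(3)] by (elim exE conjE) (rule that; assumption)
  obtain r4 u4 where U4: "r4 mod (2*m) = (k + 4) mod (2*m)" "in_O u4" "\<forall>n. cg D n (iota D (a j n)) (piD D ^ r4 * iota D (u4 n))"
     "\<forall>n\<ge>1. unitR D (iota D (u4 n))"
    using level_unpack[OF D lc4] by (elim exE conjE) (rule that; assumption)
  have j1: "i1 \<noteq> j"
  proof
    assume "i1 = j"
    then show False using distinct_lev[OF D m(2) U1(3,4) _ U4(4) U1(1) U4(1)] U4(3) by simp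
  qed
  have j2: "i2 \<noteq> j"
  proof
    assume "i2 = j"
    then show False using distinct_lev[OF D m(2) U2(3,4) _ U4(4) U2(1) U4(1)] U4(3) by simp
  qed
  have j3: "i3 \<noteq> j"
  proof
    assume "i3 = j"
    then show False using distinct_lev[OF D m(2) U3(3,4) _ U4(4) U3(1) U4(1)] U4(3) by simp
  qed
  define key where "key u = (if c = 0 then snd (u 3) div 2 else fst (u 3) div 2)" for u :: Oelt
  consider "key u1 mod 2 = key u2 mod 2" | "key u1 mod 2 = key u3 mod 2" | "key u2 mod 2 = key u3 mod 2"
    using pig3 by blast
  then show ?thesis
  proof cases
    case 1
    have "4 dvd (fst (u1 3) * snd (u2 3) - fst (u2 3) * snd (u1 3))"
      by (rule pig_pair[OF U1(5) U1(6,7) U2(5,6)]) (use 1 in \<open>simp add: key_def\<close>)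
    then show ?thesis
      using core[OF D m idx(1,2) j idx(4) j1 j2 U1(2,3,4) U2(2,3,4) U4(2,3,4) U1(1) U2(1) U4(1) U1(5) U1(6,7) U2(5,6)]
      by blast
  next
    case 2
    have "4 dvd (fst (u1 3) * snd (u3 3) - fst (u3 3) * snd (u1 3))"
      by (rule pig_pair[OF U1(5) U1(6,7) U3(5,6)]) (use 2 in \<open>simp add: key_def\<close>)
    then show ?thesis
      using core[OF D m idx(1,3) j idx(5) j1 j3 U1(2,3,4) U3(2,3,4) U4(2,3,4) U1(1) U3(1) U4(1) U1(5) U1(6,7) U3(5,6)]
      by blast
  next
    case 3
    have "4 dvd (fst (u2 3) * snd (u3 3) - fst (u3 3) * snd (u2 3))"
      by (rule pig_pair[OF U1(5) U2(5,6) U3(5,6)]) (use 3 in \<open>simp add: key_def\<close>)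
    then show ?thesis
      using core[OF D m idx(2,3) j idx(6) j2 j3 U2(2,3,4) U3(2,3,4) U4(2,3,4) U2(1) U3(1) U4(1) U1(5) U2(5,6) U3(5,6)]
      by blast
  qed
qed

end
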